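(* Under the model and assumptions (A1)–(A2) (with $\theta^\ast\in\Theta$ almost surely), define the confidence set $$\Theta_{1-\alpha}=\Big\{\theta\in\Theta:\ \max_{\psi\in\Psi}\mathrm{pval}(\theta,\psi)>\alpha\Big\}.$$ Then $\Pr(\theta^\ast\in\Theta_{1-\alpha})\ge 1-\alpha$ for every $\alpha\in(0,1)$.
   Context: Data $y_i=y^{\mathrm{p}}(t_i)+\varepsilon(t_i)$, $i=1,\dots,n$, with times $T^{(n)}$, data vector $Y^{(n)}$, error vector $\varepsilon^{(n)}$. (A1): $g\,\varepsilon^{(n)}\overset{d}{=}\varepsilon^{(n)}$ given $T^{(n)}$ for all $g\in\mathbb{D}^n$, the group of $n\times n$ diagonal $\pm1$ matrices. (A2): $y^{\mathrm{p}}(t)=y^{\mathrm{p}}(t;\theta^\ast,\psi^\ast)$ where $y^{\mathrm{p}}(t;\theta,\psi)=\psi_1+\psi_2\cos(2\pi t/\theta)+\psi_3\sin(2\pi t/\theta)$, $\theta^\ast\in\Theta$ (a finite subset of $\mathbb{R}^+$), $\psi^\ast\in\Psi\subseteq\mathbb{R}^3$ convex and compact. For $(\theta_0,\psi_0)\in\Theta\times\Psi$: loss $L(\theta,\psi)=\sum_i[y_i-y^{\mathrm{p}}(t_i;\theta,\psi)]^2/\sigma_i^2$ (known $\sigma_i^2>0$), $L_{0n}=\sum_i(y_i-\bar y)^2/\sigma_i^2$, $A_n(\theta\mid Y^{(n)},T^{(n)},\psi)=(L_{0n}-L(\theta,\psi))/L_{0n}$; statistic $s_n(Y^{(n)},T^{(n)})=\max_{\theta\in\Theta}A_n(\theta\mid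 Y^{(n)},T^{(n)},\psi_0)-A_n(\theta_0\mid Y^{(n)},T^{(n)},\psi_0)$, $s_{\mathrm{obs}}$ its observed value; $Y^{(n),\mathrm{p}}_0=(y^{\mathrm{p}}(t_i;\theta_0,\psi_0))_i$; for $G\sim\mathrm{Unif}(\mathbb{D}^n)$, $Y^{(n),G}=Y^{(n),\mathrm{p}}_0+G(Y^{(n)}-Y^{(n),\mathrm{p}}_0)$; $\mathrm{pval}(\theta_0,\psi_0)=\Pr_G\{s_n(Y^{(n),G},T^{(n)})\ge s_{\mathrm{obs}}\mid Y^{(n)},T^{(n)}\}$. *)

theory Defs
  imports "HOL-Probability.Probability"
begin

definition yp :: "real \<Rightarrow> real^3 \<Rightarrow> real \<Rightarrow> real" where
  "yp \<theta> \<psi> t = \<psi>$1 + \<psi>$2 * cos (2 * pi * t / \<theta>) + \<psi>$3 * sin (2 * pi * t / \<theta>)"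

definition lossL :: "('n::finite \<Rightarrow> real) \<Rightarrow> ('n \<Rightarrow> real) \<Rightarrow> ('n \<Rightarrow> real) \<Rightarrow> real \<Rightarrow> real^3 \<Rightarrow> real" where
  "lossL sigma2 Y T \<theta> \<psi> = (\<Sum>i\<in>UNIV. (Y i - yp \<theta> \<psi> (T i))^2 / sigma2 i)"

definition ybar :: "('n::finite \<Rightarrow> real) \<Rightarrow> real" where
  "ybar Y = (\<Sum>i\<in>UNIV. Y i) / real CARD('n)"

definition L0 :: "('n::finite \<Rightarrow> real) \<Rightarrow> ('n \<Rightarrow> real) \<Rightarrow> real" where
  "L0 sigma2 Y = (\<Sum>i\<in>UNIV. (Y i - ybar Y)^2 / sigma2 i)"

definition An :: "('n::finite \<Rightarrow> real) \<Rightarrow> ('n \<Rightarrow> real) \<Rightarrow> ('n \<Rightarrow> real) \<Rightarrow> real \<Rightarrow> real^3 \<Rightarrow> real" where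
  "An sigma2 Y T \<theta> \<psi> = (L0 sigma2 Y - lossL sigma2 Y T \<theta> \<psi>) / L0 sigma2 Y"

definition stat :: "real set \<Rightarrow> ('n::finite \<Rightarrow> real) \<Rightarrow> real \<Rightarrow> real^3 \<Rightarrow> ('n \<Rightarrow> real) \<Rightarrow> ('n \<Rightarrow> real) \<Rightarrow> real" where
  "stat \<Theta> sigma2 \<theta>0 \<psi>0 Y T =
     Max ((\<lambda>\<theta>. An sigma2 Y T \<theta> \<psi>0) ` \<Theta>) - An sigma2 Y T \<theta>0 \<psi>0"

text \<open>The group D^n of diagonal sign matrices, represented by their diagonals.\<close>
definition signs :: "('n::finite \<Rightarrow> real) set" where
  "signs = {g. \<forall>i. g i = 1 \<or> g i = -1}"

definition flipY :: "real \<Rightarrow> real^3 \<Rightarrow> ('n \<Rightarrow> real) \<Rightarrow> ('n \<Rightarrow> real) \<Rightarrow> ('n \<Rightarrow> real) \<Rightarrow> ('n \<Rightarrow> real)" where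
  "flipY \<theta>0 \<psi>0 T Y g = (\<lambda>i. yp \<theta>0 \<psi>0 (T i) + g i * (Y i - yp \<theta>0 \<psi>0 (T i)))"

definition pval :: "real set \<Rightarrow> ('n::finite \<Rightarrow> real) \<Rightarrow> ('n \<Rightarrow> real) \<Rightarrow> ('n \<Rightarrow> real) \<Rightarrow> real \<Rightarrow> real^3 \<Rightarrow> real" where
  "pval \<Theta> sigma2 Y T \<theta>0 \<psi>0 =
     measure_pmf.prob (pmf_of_set signs)
       {g. stat \<Theta> sigma2 \<theta>0 \<psi>0 (flipY \<theta>0 \<psi>0 T Y g) T \<ge> stat \<Theta> sigma2 \<theta>0 \<psi>0 Y T}"

definition confset :: "real set \<Rightarrow> (real^3) set \<Rightarrow> ('n::finite \<Rightarrow> real) \<Rightarrow> real \<Rightarrow> ('n \<Rightarrow> real) \<Rightarrow> ('n \<Rightarrow> real) \<Rightarrow> real set" where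
  "confset \<Theta> \<Psi> sigma2 \<alpha> Y T =
     {\<theta> \<in> \<Theta>. Max ((\<lambda>\<psi>. pval \<Theta> sigma2 Y T \<theta> \<psi>) ` \<Psi>) > \<alpha>}"

end

theory Submission
  imports Defs
begin


lemma signs_eq: "(signs :: ('n::finite \<Rightarrow> real) set) = PiE UNIV (\<lambda>_. {1, -1})"
  unfolding signs_def PiE_def Pi_def extensional_def by auto

lemma signs_finite: "finite (signs :: ('n::finite \<Rightarrow> real) set)"
  unfolding signs_eq by (intro finite_PiE) auto

lemma signs_ne: "(signs :: ('n::finite \<Rightarrow> real) set) \<noteq> {}"
  unfolding signs_def by (rule ex_in_conv[THEN iffD1]) (rule exI[of _ "\<lambda>_. 1"], auto)

lemma signs_sq: "g \<in> signs \<Longrightarrow> g i * g i = 1"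
  unfolding signs_def by (cases "g i = 1") auto

lemma signs_mult: "g \<in> signs \<Longrightarrow> h \<in> signs \<Longrightarrow> (\<lambda>i. g i * h i) \<in> signs"
  unfolding signs_def
proof (intro CollectI allI)
  fix i assume "g \<in> {g. \<forall>i. g i = 1 \<or> g i = - 1}" "h \<in> {g. \<forall>i. g i = 1 \<or> g i = - 1}"
  then have "g i = 1 \<or> g i = - 1" "h i = 1 \<or> h i = - 1" by auto
  then show "g i * h i = 1 \<or> g i * h i = - 1" by auto
qed

lemma pval_card:
  fixes sigma2 :: "'n::finite \<Rightarrow> real"
  shows "pval \<Theta> sigma2 Y T \<theta>0 \<psi>0 =
    real (card {g\<in>signs. stat \<Theta> sigma2 \<theta>0 \<psi>0 Y T \<le> stat \<Theta> sigma2 \<theta>0 \<psi>0 (flipY \<theta>0 \<psi>0 T Y g) T})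
     / real (card (signs :: ('n::finite \<Rightarrow> real) set))"
  unfolding pval_def measure_pmf_of_set[OF signs_ne signs_finite] Int_def by simp

lemma count_bound:
  fixes f :: "'a \<Rightarrow> real" and K :: real
  assumes "finite S" "K \<ge> 0"
  shows "real (card {h\<in>S. real (card {g\<in>S. f h \<le> f g}) \<le> K}) \<le> K"
proof (cases "{h\<in>S. real (card {g\<in>S. f h \<le> f g}) \<le> K} = {}")
  case True then show ?thesis using assms by (simp only: True card.empty)
next
  case False
  define H where "H = {h\<in>S. real (card {g\<in>S. f h \<le> f g}) \<le> K}"
  have fH: "finite H" using assms unfolding H_def by auto
  have "Min (f ` H) \<in> f ` H" using False fH unfolding H_def[symmetric] by (intro Min_in) auto
  then obtain h0 where h0: "h0 \<in> H" "f h0 = Min (f ` H)" by auto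
  have "H \<subseteq> {g\<in>S. f h0 \<le> f g}" using h0 fH unfolding H_def by auto
  then have "card H \<le> card {g\<in>S. f h0 \<le> f g}" using assms by (intro card_mono) auto
  also have "real \<dots> \<le> K" using h0 unfolding H_def by auto
  finally show ?thesis unfolding H_def by simp
qed

lemma card_shift:
  assumes h: "h \<in> signs"
  shows "card {g\<in>signs. P (\<lambda>i. g i * (h i * e i))} = card {g\<in>(signs::('n::finite \<Rightarrow> real) set). P (\<lambda>i. g i * e i)}"
proof (rule bij_betw_same_card)
  let ?f = "\<lambda>g i. g i * (h i :: real)"
  have hh: "\<And>i x. x * h i * h i = x" using signs_sq[OF h] by (metis mult.assoc mult_1_right)
  have hh2: "\<And>g. ?f (?f g) = g" by (rule ext) (rule hh)
  have hh3: "\<And>g. (\<lambda>i. ?f g i * (h i * e i)) = (\<lambda>i. g i * e i)"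
    using hh by (metis mult.assoc)
  have hh4: "\<And>g. g \<in> signs \<Longrightarrow> ?f g \<in> signs" using h signs_mult by blast
  show "bij_betw ?f {g\<in>signs. P (\<lambda>i. g i * (h i * e i))} {g\<in>signs. P (\<lambda>i. g i * e i)}"
  proof (rule bij_betw_byWitness[where f'="?f"])
    show "\<forall>a\<in>{g \<in> signs. P (\<lambda>i. g i * (h i * e i))}. ?f (?f a) = a"
      using hh2 by blast
    show "\<forall>a\<in>{g \<in> signs. P (\<lambda>i. g i * e i)}. ?f (?f a) = a"
      using hh2 by blast
    show "?f ` {g \<in> signs. P (\<lambda>i. g i * (h i * e i))} \<subseteq> {g \<in> signs. P (\<lambda>i. g i * e i)}"
    proof
      fix x assume "x \<in> ?f ` {g \<in> signs. P (\<lambda>i. g i * (h i * e i))}"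
      then obtain g where g: "g \<in> signs" "P (\<lambda>i. g i * (h i * e i))" "x = ?f g" by blast
      have "(\<lambda>i. x i * e i) = (\<lambda>i. g i * (h i * e i))" unfolding g(3) by (simp add: mult.assoc)
      then show "x \<in> {g \<in> signs. P (\<lambda>i. g i * e i)}" using g hh4 by simp
    qed
    show "?f ` {g \<in> signs. P (\<lambda>i. g i * e i)} \<subseteq> {g \<in> signs. P (\<lambda>i. g i * (h i * e i))}"
    proof
      fix x assume "x \<in> ?f ` {g \<in> signs. P (\<lambda>i. g i * e i)}"
      then obtain g where g: "g \<in> signs" "P (\<lambda>i. g i * e i)" "x = ?f g" by blast
      have "(\<lambda>i. x i * (h i * e i)) = (\<lambda>i. g i * e i)" unfolding g(3) by (rule hh3)
      then show "x \<in> {g \<in> signs. P (\<lambda>i. g i * (h i * e i))}" using g hh4 by simp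
    qed
  qed
qed

definition NumF :: "real set \<Rightarrow> ('n::finite \<Rightarrow> real) \<Rightarrow> real \<Rightarrow> real^3 \<Rightarrow> ('n \<Rightarrow> real) \<Rightarrow> ('n \<Rightarrow> real) \<Rightarrow> real" where
  "NumF \<Theta> sigma2 \<theta>0 \<psi> W t = Max ((\<lambda>\<theta>. L0 sigma2 W - lossL sigma2 W t \<theta> \<psi>) ` \<Theta>) - (L0 sigma2 W - lossL sigma2 W t \<theta>0 \<psi>)"

lemma L0_nonneg: "(\<And>i. sigma2 i > 0) \<Longrightarrow> L0 sigma2 W \<ge> 0"
  unfolding L0_def by (intro sum_nonneg divide_nonneg_pos) (auto simp: less_imp_le)

lemma NumF_nonneg: "finite \<Theta> \<Longrightarrow> \<theta>0 \<in> \<Theta> \<Longrightarrow> NumF \<Theta> sigma2 \<theta>0 \<psi> W t \<ge> 0"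
  unfolding NumF_def by (auto intro: Max_ge)

lemma stat_eq:
  assumes "finite \<Theta>" "\<theta>0 \<in> \<Theta>" "\<And>i. sigma2 i > 0"
  shows "stat \<Theta> sigma2 \<theta>0 \<psi> W t = NumF \<Theta> sigma2 \<theta>0 \<psi> W t / L0 sigma2 W"
proof -
  define L where "L = L0 sigma2 W"
  define a where "a = (\<lambda>\<theta>. L0 sigma2 W - lossL sigma2 W t \<theta> \<psi>)"
  have L: "L \<ge> 0" using L0_nonneg[OF assms(3)] L_def by auto
  have ne: "\<Theta> \<noteq> {}" using assms by auto
  have st: "stat \<Theta> sigma2 \<theta>0 \<psi> W t = Max ((\<lambda>\<theta>. a \<theta> / L) ` \<Theta>) - a \<theta>0 / L"
    unfolding stat_def An_def a_def L_def by simp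
  show ?thesis
  proof (cases "L = 0")
    case True
    have "(\<lambda>\<theta>. a \<theta> / L) ` \<Theta> = {0}" using True ne by auto
    then show ?thesis using True unfolding st L_def by simp
  next
    case False
    then have Lp: "L > 0" using L by auto
    have "mono (\<lambda>v. v / L)" using Lp by (intro monoI) (simp add: divide_right_mono)
    then have "Max ((\<lambda>v. v / L) ` (a ` \<Theta>)) = Max (a ` \<Theta>) / L"
      using assms ne by (intro mono_Max_commute[symmetric]) auto
    then have "Max ((\<lambda>\<theta>. a \<theta> / L) ` \<Theta>) = Max (a ` \<Theta>) / L" by (simp add: image_image)
    moreover have "NumF \<Theta> sigma2 \<theta>0 \<psi> W t = Max (a ` \<Theta>) - a \<theta>0"
      unfolding NumF_def a_def by simp
    ultimately show ?thesis unfolding st L_def[symmetric] by (simp add: diff_divide_distrib)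
  qed
qed

lemma frac_cond:
  fixes a b p q :: real
  assumes "a \<ge> 0" "p \<ge> 0" "q \<ge> 0"
  shows "(b / q \<le> a / p) \<longleftrightarrow> (q = 0 \<or> (\<exists>m::nat. p \<ge> 1 / real (Suc m) \<and> b * p \<le> a * q) \<or> (p = 0 \<and> b \<le> 0))"
proof (cases "q = 0")
  case True then show ?thesis using assms by simp
next
  case qn: False
  then have qp: "q > 0" using assms by auto
  show ?thesis
  proof (cases "p = 0")
    case True
    have pos: "\<And>m::nat. 1 / real (Suc m) > 0" by simp
    have "(b / q \<le> a / p) \<longleftrightarrow> b \<le> 0" using qp True by (simp add: divide_le_0_iff)
    moreover have "\<not> (\<exists>m::nat. p \<ge> 1 / real (Suc m) \<and> b * p \<le> a * q)"
      using True pos by (metis not_le)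
    ultimately show ?thesis using qn True by blast
  next
    case False
    then have pp: "p > 0" using assms by auto
    from reals_Archimedean[OF pp] obtain m where "inverse (real (Suc m)) < p" by blast
    then have ex: "\<exists>m::nat. p \<ge> 1 / real (Suc m)" by (intro exI[of _ m]) (simp add: inverse_eq_divide)
    have "(b / q \<le> a / p) \<longleftrightarrow> b * p \<le> a * q" using pp qp by (simp add: field_simps)
    then show ?thesis using ex qn False by blast
  qed
qed



lemma cont_L0:
  fixes W :: "'a::t2_space \<Rightarrow> ('n::finite \<Rightarrow> real)"
  assumes "\<And>i. continuous_on UNIV (\<lambda>x. W x i)"
  shows "continuous_on UNIV (\<lambda>x. L0 sigma2 (W x))"
  unfolding L0_def ybar_def divide_inverse by (intro continuous_intros assms)

lemma cont_yp:
  fixes t :: "'a::t2_space \<Rightarrow> real" and \<psi> :: "'a \<Rightarrow> real^3"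
  assumes "continuous_on UNIV t" "continuous_on UNIV \<psi>"
  shows "continuous_on UNIV (\<lambda>x. yp \<theta> (\<psi> x) (t x))"
  unfolding yp_def divide_inverse by (intro continuous_intros assms)

lemma cont_lossL:
  fixes W t :: "'a::t2_space \<Rightarrow> ('n::finite \<Rightarrow> real)" and \<psi> :: "'a \<Rightarrow> real^3"
  assumes "\<And>i. continuous_on UNIV (\<lambda>x. W x i)" "\<And>i. continuous_on UNIV (\<lambda>x. t x i)"
    "continuous_on UNIV \<psi>"
  shows "continuous_on UNIV (\<lambda>x. lossL sigma2 (W x) (t x) \<theta> (\<psi> x))"
  unfolding lossL_def divide_inverse by (intro continuous_intros assms cont_yp)

lemma cont_Max:
  fixes f :: "'b \<Rightarrow> 'a::t2_space \<Rightarrow> real"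
  assumes "finite A" "A \<noteq> {}" "\<And>a. a \<in> A \<Longrightarrow> continuous_on UNIV (f a)"
  shows "continuous_on UNIV (\<lambda>x. Max ((\<lambda>a. f a x) ` A))"
  using assms
proof (induction A rule: finite_ne_induct)
  case (singleton a) then show ?case by simp
next
  case (insert a A)
  have "continuous_on UNIV (\<lambda>x. max (f a x) (Max ((\<lambda>a. f a x) ` A)))"
    using insert by (intro continuous_on_max) auto
  moreover have "\<And>x. Max ((\<lambda>a. f a x) ` insert a A) = max (f a x) (Max ((\<lambda>a. f a x) ` A))"
    using insert by (simp add: Max_insert)
  ultimately show ?case by simp
qed

lemma cont_NumF:
  fixes W t :: "'a::t2_space \<Rightarrow> ('n::finite \<Rightarrow> real)" and \<psi> :: "'a \<Rightarrow> real^3"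
  assumes "\<And>i. continuous_on UNIV (\<lambda>x. W x i)" "\<And>i. continuous_on UNIV (\<lambda>x. t x i)"
    "continuous_on UNIV \<psi>" "finite \<Theta>" "\<theta>0 \<in> \<Theta>"
  shows "continuous_on UNIV (\<lambda>x. NumF \<Theta> sigma2 \<theta>0 (\<psi> x) (W x) (t x))"
  unfolding NumF_def
  by (intro continuous_intros cont_Max cont_L0 cont_lossL assms) (use assms(5) in auto)



context
  fixes \<Theta> :: "real set" and sigma2 :: "'n::finite \<Rightarrow> real" and \<theta>s :: real and \<psi>s :: "real^3"
  assumes fin: "finite \<Theta>" and mem: "\<theta>s \<in> \<Theta>" and sp: "\<And>i. sigma2 i > 0"
begin

definition Yv :: "(real^3) \<times> ((real^'n) \<times> (real^'n)) \<Rightarrow> ('n \<Rightarrow> real)" where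
  "Yv x = (\<lambda>i. yp \<theta>s \<psi>s (fst (snd x) $ i) + snd (snd x) $ i)"

definition Wg :: "('n \<Rightarrow> real) \<Rightarrow> (real^3) \<times> ((real^'n) \<times> (real^'n)) \<Rightarrow> ('n \<Rightarrow> real)" where
  "Wg g x = flipY \<theta>s (fst x) (\<lambda>i. fst (snd x) $ i) (Yv x) g"

definition condg :: "('n \<Rightarrow> real) \<Rightarrow> (real^3) \<times> ((real^'n) \<times> (real^'n)) \<Rightarrow> bool" where
  "condg g x \<longleftrightarrow> stat \<Theta> sigma2 \<theta>s (fst x) (Yv x) (\<lambda>i. fst (snd x) $ i)
      \<le> stat \<Theta> sigma2 \<theta>s (fst x) (Wg g x) (\<lambda>i. fst (snd x) $ i)"

definition qf :: "(real^3) \<times> ((real^'n) \<times> (real^'n)) \<Rightarrow> real" where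
  "qf x = L0 sigma2 (Yv x)"
definition bf :: "(real^3) \<times> ((real^'n) \<times> (real^'n)) \<Rightarrow> real" where
  "bf x = NumF \<Theta> sigma2 \<theta>s (fst x) (Yv x) (\<lambda>i. fst (snd x) $ i)"
definition pf :: "('n \<Rightarrow> real) \<Rightarrow> (real^3) \<times> ((real^'n) \<times> (real^'n)) \<Rightarrow> real" where
  "pf g x = L0 sigma2 (Wg g x)"
definition af :: "('n \<Rightarrow> real) \<Rightarrow> (real^3) \<times> ((real^'n) \<times> (real^'n)) \<Rightarrow> real" where
  "af g x = NumF \<Theta> sigma2 \<theta>s (fst x) (Wg g x) (\<lambda>i. fst (snd x) $ i)"

definition Fm :: "('n \<Rightarrow> real) \<Rightarrow> nat \<Rightarrow> ((real^3) \<times> ((real^'n) \<times> (real^'n))) set" where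
  "Fm g m = {x. qf x = 0} \<union> {x. 1 / real (Suc m) \<le> pf g x \<and> bf x * pf g x \<le> af g x * qf x}
     \<union> {x. pf g x = 0 \<and> bf x \<le> 0}"

lemma condg_iff: "condg g x \<longleftrightarrow> (\<exists>m. x \<in> Fm g m)"
proof -
  have "condg g x \<longleftrightarrow> bf x / qf x \<le> af g x / pf g x"
    unfolding condg_def bf_def qf_def af_def pf_def
    by (simp add: stat_eq[OF fin mem sp])
  also have "\<dots> \<longleftrightarrow> (qf x = 0 \<or> (\<exists>m::nat. pf g x \<ge> 1 / real (Suc m) \<and> bf x * pf g x \<le> af g x * qf x) \<or> (pf g x = 0 \<and> bf x \<le> 0))"
    by (rule frac_cond) (auto simp: af_def pf_def qf_def intro: NumF_nonneg[OF fin mem] L0_nonneg[OF sp])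
  also have "\<dots> \<longleftrightarrow> (\<exists>m. x \<in> Fm g m)" unfolding Fm_def by blast
  finally show ?thesis .
qed

lemma Fm_mono: "m \<le> m' \<Longrightarrow> Fm g m \<subseteq> Fm g m'"
proof -
  assume "m \<le> m'"
  then have "1 / real (Suc m') \<le> 1 / real (Suc m)" by (simp add: frac_le)
  then show ?thesis unfolding Fm_def by auto
qed

lemma cont_Yv: "continuous_on UNIV (\<lambda>x. Yv x i)"
  unfolding Yv_def by (intro continuous_intros cont_yp)

lemma cont_Wg: "continuous_on UNIV (\<lambda>x. Wg g x i)"
  unfolding Wg_def flipY_def by (intro continuous_intros cont_yp cont_Yv)

lemma closed_Fm: "closed (Fm g m)"
proof -
  have c1: "continuous_on UNIV qf" unfolding qf_def by (intro cont_L0 cont_Yv)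
  have c2: "continuous_on UNIV (pf g)" unfolding pf_def by (intro cont_L0 cont_Wg)
  have c3: "continuous_on UNIV bf" unfolding bf_def
    by (intro cont_NumF cont_Yv fin mem continuous_intros)
  have c4: "continuous_on UNIV (af g)" unfolding af_def
    by (intro cont_NumF cont_Wg fin mem continuous_intros)
  show ?thesis unfolding Fm_def
    by (intro closed_Un closed_Collect_conj closed_Collect_eq closed_Collect_le continuous_intros c1 c2 c3 c4)
qed

lemma closed_Dm: "closed {x. K < real (card {g\<in>signs. x \<in> Fm g m})}"
proof -
  have eq: "{x. K < real (card {g\<in>signs. x \<in> Fm g m})} =
        (\<Union>H\<in>{H. H \<subseteq> signs \<and> K < real (card H)}. \<Inter>g\<in>H. Fm g m)"
  proof (intro set_eqI iffI)
    fix x assume "x \<in> {x. K < real (card {g\<in>signs. x \<in> Fm g m})}"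
    then show "x \<in> (\<Union>H\<in>{H. H \<subseteq> signs \<and> K < real (card H)}. \<Inter>g\<in>H. Fm g m)"
      by (intro UN_I[of "{g\<in>signs. x \<in> Fm g m}"]) auto
  next
    fix x assume "x \<in> (\<Union>H\<in>{H. H \<subseteq> signs \<and> K < real (card H)}. \<Inter>g\<in>H. Fm g m)"
    then obtain H where H: "H \<subseteq> signs" "K < real (card H)" "\<And>g. g \<in> H \<Longrightarrow> x \<in> Fm g m" by blast
    have "card H \<le> card {g\<in>signs. x \<in> Fm g m}"
      using H signs_finite by (intro card_mono) auto
    then show "x \<in> {x. K < real (card {g\<in>signs. x \<in> Fm g m})}" using H(2) by simp
  qed
  have fin: "finite {H. H \<subseteq> (signs :: ('n \<Rightarrow> real) set) \<and> K < real (card H)}"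
    using signs_finite by (rule finite_subset[rotated, OF finite_Pow_iff[THEN iffD2]]) auto
  show ?thesis unfolding eq
    by (intro closed_UN fin ballI closed_INT closed_Fm)
qed

lemma D_eq: "{x. K < real (card {g\<in>signs. condg g x})} = (\<Union>m. {x. K < real (card {g\<in>signs. x \<in> Fm g m})})"
proof (intro set_eqI iffI)
  fix x assume "x \<in> (\<Union>m. {x. K < real (card {g\<in>signs. x \<in> Fm g m})})"
  then obtain m where m: "K < real (card {g\<in>signs. x \<in> Fm g m})" by blast
  have "card {g\<in>signs. x \<in> Fm g m} \<le> card {g\<in>signs. condg g x}"
    using signs_finite condg_iff by (intro card_mono) auto
  then show "x \<in> {x. K < real (card {g\<in>signs. condg g x})}" using m by simp
next
  fix x assume x: "x \<in> {x. K < real (card {g\<in>signs. condg g x})}"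
  define G where "G = {g\<in>signs. condg g x}"
  define mg where "mg g = (SOME m. x \<in> Fm g m)" for g
  have mg: "x \<in> Fm g (mg g)" if "g \<in> G" for g
    using that condg_iff unfolding G_def mg_def by (metis (mono_tags, lifting) mem_Collect_eq someI_ex)
  define M where "M = (\<Sum>g\<in>G. mg g)"
  have fG: "finite G" using signs_finite unfolding G_def by auto
  have "x \<in> Fm g M" if "g \<in> G" for g
  proof -
    have "mg g \<le> M" unfolding M_def using that fG by (intro member_le_sum) auto
    then show ?thesis using Fm_mono[of "mg g" M g] mg[OF that] by auto
  qed
  then have "G \<subseteq> {g\<in>signs. x \<in> Fm g M}" unfolding G_def by auto
  then have "card G \<le> card {g\<in>signs. x \<in> Fm g M}" using signs_finite by (intro card_mono) auto
  then have "K < real (card {g\<in>signs. x \<in> Fm g M})" using x unfolding G_def by simp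
  then show "x \<in> (\<Union>m. {x. K < real (card {g\<in>signs. x \<in> Fm g m})})" by blast
qed

lemma D_borel: "{x. K < real (card {g\<in>signs. condg g x})} \<in> sets borel"
  unfolding D_eq by (intro sets.countable_UN[of _ UNIV] subsetI, auto intro: borel_closed closed_Dm)

lemma C_borel:
  assumes "compact \<Psi>"
  shows "{z. \<exists>\<psi>\<in>\<Psi>. K < real (card {g\<in>signs. condg g (\<psi>, z)})} \<in> sets borel"
proof -
  have eq: "{z. \<exists>\<psi>\<in>\<Psi>. K < real (card {g\<in>signs. condg g (\<psi>, z)})}
     = (\<Union>m. {z. \<exists>\<psi>. \<psi> \<in> \<Psi> \<and> (\<psi>, z) \<in> {x. K < real (card {g\<in>signs. x \<in> Fm g m})}})"
    using D_eq by blast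
  have cl: "\<And>m. {z. \<exists>\<psi>. \<psi> \<in> \<Psi> \<and> (\<psi>, z) \<in> {x. K < real (card {g\<in>signs. x \<in> Fm g m})}} \<in> sets borel"
    by (intro borel_closed closed_compact_projection[OF assms closed_Dm])
  show ?thesis unfolding eq
    by (rule sets.countable_UN[of _ UNIV]) (use cl in blast)
qed

end


lemma vec_nth_lambda: "vec_nth (vec_lambda t) = t"
  by (rule ext) simp

lemma meas_vec:
  assumes "\<And>i. (\<lambda>\<omega>. f \<omega> i) \<in> borel_measurable M"
  shows "(\<lambda>\<omega>. (\<chi> i. f \<omega> i) :: real^'n::finite) \<in> borel_measurable M"
proof (rule borel_measurable_euclidean_space[THEN iffD2], intro ballI)
  fix b :: "real^'n" assume "b \<in> Basis"
  then obtain j where j: "b = axis j 1" unfolding Basis_vec_def by auto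
  show "(\<lambda>\<omega>. (\<chi> i. f \<omega> i) \<bullet> b) \<in> borel_measurable M"
    unfolding j inner_axis using assms by simp
qed

lemma condg_eval:
  assumes "finite \<Theta>" "\<theta>s \<in> \<Theta>" "\<And>i. sigma2 i > 0"
  shows "condg \<Theta> sigma2 \<theta>s \<psi>s g (\<psi>, (vec_lambda t, vec_lambda e)) \<longleftrightarrow>
    stat \<Theta> sigma2 \<theta>s \<psi> (\<lambda>i. yp \<theta>s \<psi>s (t i) + e i) t
     \<le> stat \<Theta> sigma2 \<theta>s \<psi> (flipY \<theta>s \<psi> t (\<lambda>i. yp \<theta>s \<psi>s (t i) + e i) g) t"
  by (simp add: condg_def[OF assms] Yv_def[OF assms] Wg_def[OF assms] vec_nth_lambda)

lemma condg_flip: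
  assumes "finite \<Theta>" "\<theta>s \<in> \<Theta>" "\<And>i. sigma2 i > 0"
  shows "condg \<Theta> sigma2 \<theta>s \<psi>s g (\<psi>s, (vec_lambda t, vec_lambda e)) \<longleftrightarrow>
    stat \<Theta> sigma2 \<theta>s \<psi>s (\<lambda>i. yp \<theta>s \<psi>s (t i) + e i) t
     \<le> stat \<Theta> sigma2 \<theta>s \<psi>s (\<lambda>i. yp \<theta>s \<psi>s (t i) + g i * e i) t"
proof -
  have "flipY \<theta>s \<psi>s t (\<lambda>i. yp \<theta>s \<psi>s (t i) + e i) g = (\<lambda>i. yp \<theta>s \<psi>s (t i) + g i * e i)"
    unfolding flipY_def by simp
  then show ?thesis using condg_eval[where ?sigma2.0=sigma2, OF assms] by simp
qed

lemma sum_ind_card: "finite S \<Longrightarrow> (\<Sum>h\<in>S. indicator (B h) w :: real) = real (card {h\<in>S. w \<in> B h})"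
proof -
  assume "finite S"
  then have "(\<Sum>h\<in>S. indicator (B h) w :: real) = real (card (S \<inter> {h. w \<in> B h}))"
    by (simp add: indicator_def)
  also have "S \<inter> {h. w \<in> B h} = {h\<in>S. w \<in> B h}" by blast
  finally show ?thesis .
qed

theorem theorem2:
  fixes M :: "'w measure"
    and T eps :: "'w \<Rightarrow> ('n::finite \<Rightarrow> real)"
    and \<Theta> :: "real set" and \<Psi> :: "(real^3) set"
    and \<theta>s :: real and \<psi>s :: "real^3"
    and sigma2 :: "'n \<Rightarrow> real" and \<alpha> :: real
  assumes "prob_space M"
    and "T \<in> M \<rightarrow>\<^sub>M PiM UNIV (\<lambda>_. borel)"
    and "eps \<in> M \<rightarrow>\<^sub>M PiM UNIV (\<lambda>_. borel)"
    and A1: "\<And>g. g \<in> signs \<Longrightarrow>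
       distr M (PiM UNIV (\<lambda>_::'n. borel) \<Otimes>\<^sub>M PiM UNIV (\<lambda>_::'n. borel)) (\<lambda>\<omega>. (T \<omega>, \<lambda>i. g i * eps \<omega> i))
     = distr M (PiM UNIV (\<lambda>_::'n. borel) \<Otimes>\<^sub>M PiM UNIV (\<lambda>_::'n. borel)) (\<lambda>\<omega>. (T \<omega>, eps \<omega>))"
    and "finite \<Theta>" and "\<Theta> \<subseteq> {0<..}" and "\<theta>s \<in> \<Theta>"
    and "convex \<Psi>" and "compact \<Psi>" and "\<psi>s \<in> \<Psi>"
    and "\<And>i. sigma2 i > 0"
    and "0 < \<alpha>" and "\<alpha> < 1"
  shows "measure M {\<omega> \<in> space M.
            \<theta>s \<in> confset \<Theta> \<Psi> sigma2 \<alpha> (\<lambda>i. yp \<theta>s \<psi>s (T \<omega> i) + eps \<omega> i) (T \<omega>)}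
         \<ge> 1 - \<alpha>"
proof -
  interpret P: prob_space M by fact
  note fin = assms(5) and mem = assms(7) and sp = assms(11)
  define N where "N = real (card (signs :: ('n \<Rightarrow> real) set))"
  have Npos: "N > 0" unfolding N_def using signs_finite signs_ne by (simp add: card_gt_0_iff)
  define K where "K = \<alpha> * N"
  have K0: "K \<ge> 0" unfolding K_def using Npos assms(12) by simp
  define cnd where "cnd = condg \<Theta> sigma2 \<theta>s \<psi>s"
  define vt where "vt \<omega> = (\<chi> i. T \<omega> i)" for \<omega>
  define ve where "ve \<omega> = (\<chi> i. eps \<omega> i)" for \<omega>
  define Cset where "Cset = {z. \<exists>\<psi>\<in>\<Psi>. K < real (card {g\<in>signs. cnd g (\<psi>, z)})}"
  define PP where "PP = (PiM UNIV (\<lambda>_::'n. borel :: real measure) \<Otimes>\<^sub>M PiM UNIV (\<lambda>_::'n. borel :: real measure))"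
  define St where "St t v = stat \<Theta> sigma2 \<theta>s \<psi>s (\<lambda>i. yp \<theta>s \<psi>s (t i) + v i) t" for t v :: "'n \<Rightarrow> real"

  have pv: "pval \<Theta> sigma2 (\<lambda>i. yp \<theta>s \<psi>s (T \<omega> i) + eps \<omega> i) (T \<omega>) \<theta>s \<psi>
      = real (card {g\<in>signs. cnd g (\<psi>, (vt \<omega>, ve \<omega>))}) / N" for \<omega> \<psi>
    unfolding pval_card N_def cnd_def vt_def ve_def condg_eval[where ?sigma2.0=sigma2, OF fin mem sp] ..

  have conf_iff: "\<theta>s \<in> confset \<Theta> \<Psi> sigma2 \<alpha> (\<lambda>i. yp \<theta>s \<psi>s (T \<omega> i) + eps \<omega> i) (T \<omega>)
      \<longleftrightarrow> (vt \<omega>, ve \<omega>) \<in> Cset" for \<omega>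
  proof -
    define f where "f \<psi> = real (card {g\<in>signs. cnd g (\<psi>, (vt \<omega>, ve \<omega>))}) / N" for \<psi>
    have "f ` \<Psi> \<subseteq> (\<lambda>k. real k / N) ` {..card (signs :: ('n \<Rightarrow> real) set)}"
    proof
      fix y assume "y \<in> f ` \<Psi>"
      then obtain \<psi> where "y = f \<psi>" by blast
      moreover have "card {g\<in>signs. cnd g (\<psi>, (vt \<omega>, ve \<omega>))} \<le> card (signs :: ('n \<Rightarrow> real) set)"
        using signs_finite by (intro card_mono) auto
      ultimately show "y \<in> (\<lambda>k. real k / N) ` {..card (signs :: ('n \<Rightarrow> real) set)}"
        unfolding f_def by auto
    qed
    then have ff: "finite (f ` \<Psi>)" by (rule finite_subset) auto
    have fne: "f ` \<Psi> \<noteq> {}" using assms(10) by auto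
    have pvf: "pval \<Theta> sigma2 (\<lambda>i. yp \<theta>s \<psi>s (T \<omega> i) + eps \<omega> i) (T \<omega>) \<theta>s = f"
      by (rule ext) (simp add: pv f_def)
    have "\<theta>s \<in> confset \<Theta> \<Psi> sigma2 \<alpha> (\<lambda>i. yp \<theta>s \<psi>s (T \<omega> i) + eps \<omega> i) (T \<omega>) \<longleftrightarrow> \<alpha> < Max (f ` \<Psi>)"
      unfolding confset_def using mem by (simp add: pvf)
    also have "\<dots> \<longleftrightarrow> (\<exists>\<psi>\<in>\<Psi>. \<alpha> < f \<psi>)" using Max_gr_iff[OF ff fne] by simp
    also have "\<dots> \<longleftrightarrow> (\<exists>\<psi>\<in>\<Psi>. K < real (card {g\<in>signs. cnd g (\<psi>, (vt \<omega>, ve \<omega>))}))"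
      unfolding f_def K_def using Npos by (simp add: less_divide_eq)
    finally show ?thesis unfolding Cset_def by simp
  qed

  have Tm: "(\<lambda>\<omega>. T \<omega> i) \<in> borel_measurable M" for i
    by (rule measurable_compose[OF assms(2) measurable_component_singleton]) simp
  have em: "(\<lambda>\<omega>. eps \<omega> i) \<in> borel_measurable M" for i
    by (rule measurable_compose[OF assms(3) measurable_component_singleton]) simp
  have pairm: "(\<lambda>\<omega>. (vt \<omega>, ve \<omega>)) \<in> borel_measurable M"
    unfolding borel_prod[symmetric] vt_def ve_def
    by (intro measurable_Pair meas_vec Tm em)
  have Cset_borel: "Cset \<in> sets borel"
    unfolding Cset_def cnd_def by (rule C_borel[where ?sigma2.0=sigma2, OF fin mem sp assms(9)])
  have Bsets: "{\<omega> \<in> space M. (vt \<omega>, ve \<omega>) \<in> Cset} \<in> sets M"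
  proof -
    have "{\<omega> \<in> space M. (vt \<omega>, ve \<omega>) \<in> Cset} = (\<lambda>\<omega>. (vt \<omega>, ve \<omega>)) -` Cset \<inter> space M" by blast
    then show ?thesis using measurable_sets[OF pairm Cset_borel] by simp
  qed

  define E where "E = {p :: ('n \<Rightarrow> real) \<times> ('n \<Rightarrow> real). \<not> K < real (card {g\<in>signs. cnd g (\<psi>s, (vec_lambda (fst p), vec_lambda (snd p)))})}"
  have phim: "(\<lambda>p :: ('n \<Rightarrow> real) \<times> ('n \<Rightarrow> real). (\<psi>s, (vec_lambda (fst p), vec_lambda (snd p)))) \<in> PP \<rightarrow>\<^sub>M borel"
  proof -
    have c: "(\<lambda>p :: ('n \<Rightarrow> real) \<times> ('n \<Rightarrow> real). fst p i) \<in> borel_measurable PP" for i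
      unfolding PP_def by (rule measurable_compose[OF measurable_fst measurable_component_singleton]) simp
    have d: "(\<lambda>p :: ('n \<Rightarrow> real) \<times> ('n \<Rightarrow> real). snd p i) \<in> borel_measurable PP" for i
      unfolding PP_def by (rule measurable_compose[OF measurable_snd measurable_component_singleton]) simp
    have "(\<lambda>p :: ('n \<Rightarrow> real) \<times> ('n \<Rightarrow> real). (\<chi> i. fst p i) :: real^'n) \<in> borel_measurable PP"
      by (rule meas_vec[OF c])
    moreover have "(\<lambda>p :: ('n \<Rightarrow> real) \<times> ('n \<Rightarrow> real). (\<chi> i. snd p i) :: real^'n) \<in> borel_measurable PP"
      by (rule meas_vec[OF d])
    ultimately show ?thesis
      unfolding borel_prod[symmetric] by (intro measurable_Pair measurable_const) (simp_all add: eta_contract_eq)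
  qed
  have spPP: "space PP = UNIV" unfolding PP_def by (simp add: space_pair_measure space_PiM)
  have Esets: "E \<in> sets PP"
  proof -
    have "UNIV - {x. K < real (card {g\<in>signs. cnd g x})} \<in> sets borel"
      unfolding cnd_def using D_borel[where ?sigma2.0=sigma2, OF fin mem sp] by auto
    from measurable_sets[OF phim this] show ?thesis
      unfolding E_def spPP by (simp add: vimage_def)
  qed

  define f0 where "f0 \<omega> = (T \<omega>, eps \<omega>)" for \<omega>
  define fh where "fh h \<omega> = (T \<omega>, \<lambda>i. h i * eps \<omega> i)" for h :: "'n \<Rightarrow> real" and \<omega>
  have epsPi: "(\<lambda>\<omega> i. h i * eps \<omega> i) \<in> M \<rightarrow>\<^sub>M PiM UNIV (\<lambda>_. borel)" for h :: "'n \<Rightarrow> real"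
  proof -
    have "(\<lambda>\<omega> i. h i * eps \<omega> i) \<in> borel_measurable M"
      by (rule measurable_coordinatewise_then_product) (intro borel_measurable_times borel_measurable_const em)
    then show ?thesis using measurable_cong_sets[OF refl sets_PiM_equal_borel] by blast
  qed
  have f0m: "f0 \<in> M \<rightarrow>\<^sub>M PP" unfolding f0_def PP_def by (intro measurable_Pair assms(2) assms(3))
  have fhm: "fh h \<in> M \<rightarrow>\<^sub>M PP" for h unfolding fh_def PP_def by (intro measurable_Pair assms(2) epsPi)
  define Bad where "Bad h = fh h -` E \<inter> space M" for h
  have Bad_sets: "Bad h \<in> sets M" for h unfolding Bad_def by (rule measurable_sets[OF fhm Esets])
  have bad_eq: "measure M (f0 -` E \<inter> space M) = measure M (Bad h)" if h: "h \<in> signs" for h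
  proof -
    have "measure M (f0 -` E \<inter> space M) = measure (distr M PP f0) E" by (rule measure_distr[OF f0m Esets, symmetric])
    also have "\<dots> = measure (distr M PP (fh h)) E" using A1[OF h] unfolding PP_def f0_def fh_def by simp
    also have "\<dots> = measure M (Bad h)" unfolding Bad_def by (rule measure_distr[OF fhm Esets])
    finally show ?thesis .
  qed

  have pw: "(\<Sum>h\<in>signs. indicator (Bad h) \<omega>) \<le> K" if \<omega>: "\<omega> \<in> space M" for \<omega>
  proof -
    define t where "t = T \<omega>"
    define e where "e = eps \<omega>"
    have "(\<Sum>h\<in>signs. indicator (Bad h) \<omega> :: real) = real (card {h\<in>signs. \<omega> \<in> Bad h})"
      by (rule sum_ind_card[OF signs_finite])
    also have "{h\<in>signs. \<omega> \<in> Bad h} = {h\<in>signs. real (card {g\<in>signs. St t (\<lambda>i. g i * e i) \<ge> St t (\<lambda>i. h i * e i)}) \<le> K}"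
    proof (intro Collect_cong conj_cong refl)
      fix h :: "'n \<Rightarrow> real" assume h: "h \<in> signs"
      have "card {g\<in>signs. cnd g (\<psi>s, (vec_lambda t, vec_lambda (\<lambda>i. h i * e i)))}
          = card {g\<in>signs. St t (\<lambda>i. h i * e i) \<le> St t (\<lambda>i. g i * (h i * e i))}"
        unfolding cnd_def condg_flip[where ?sigma2.0=sigma2, OF fin mem sp] St_def ..
      also have "\<dots> = card {g\<in>signs. St t (\<lambda>i. h i * e i) \<le> St t (\<lambda>i. g i * e i)}"
        by (rule card_shift[OF h])
      finally have cc: "card {g\<in>signs. cnd g (\<psi>s, (vec_lambda t, vec_lambda (\<lambda>i. h i * e i)))}
          = card {g\<in>signs. St t (\<lambda>i. h i * e i) \<le> St t (\<lambda>i. g i * e i)}" .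
      show "(\<omega> \<in> Bad h) = (real (card {g\<in>signs. St t (\<lambda>i. g i * e i) \<ge> St t (\<lambda>i. h i * e i)}) \<le> K)"
        unfolding Bad_def E_def fh_def using \<omega> cc by (simp add: t_def e_def not_less)
    qed
    also have "real (card \<dots>) \<le> K"
      by (rule count_bound[OF signs_finite K0])
    finally show ?thesis .
  qed

  have int_ind: "integrable M (indicator (Bad h) :: 'w \<Rightarrow> real)" for h
  proof -
    have "emeasure M (Bad h) < \<infinity>" using P.emeasure_finite[of "Bad h"] by (simp add: less_top[symmetric])
    then show ?thesis using Bad_sets[of h] by (intro integrable_real_indicator)
  qed
  have "N * measure M (f0 -` E \<inter> space M) = (\<Sum>h\<in>(signs :: ('n \<Rightarrow> real) set). measure M (f0 -` E \<inter> space M))"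
    unfolding N_def by simp
  also have "\<dots> = (\<Sum>h\<in>signs. measure M (Bad h))" by (rule sum.cong[OF refl bad_eq])
  also have "\<dots> = (\<Sum>h\<in>signs. integral\<^sup>L M (indicator (Bad h)))"
    using Bad_sets by (intro sum.cong refl) (simp add: Bad_def Int_absorb2)
  also have "\<dots> = integral\<^sup>L M (\<lambda>\<omega>. \<Sum>h\<in>signs. indicator (Bad h) \<omega>)"
    by (rule Bochner_Integration.integral_sum[symmetric]) (rule int_ind)
  also have "\<dots> \<le> integral\<^sup>L M (\<lambda>_. K)"
    by (intro integral_mono pw Bochner_Integration.integrable_sum int_ind) auto
  also have "\<dots> = K" by (simp add: P.prob_space)
  finally have "N * measure M (f0 -` E \<inter> space M) \<le> \<alpha> * N" unfolding K_def .
  then have badle: "measure M (f0 -` E \<inter> space M) \<le> \<alpha>" using Npos by (simp add: mult.commute)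

  have sub: "space M - (f0 -` E \<inter> space M) \<subseteq> {\<omega> \<in> space M. (vt \<omega>, ve \<omega>) \<in> Cset}"
  proof
    fix \<omega> assume "\<omega> \<in> space M - (f0 -` E \<inter> space M)"
    then have "\<omega> \<in> space M" "K < real (card {g\<in>signs. cnd g (\<psi>s, (vt \<omega>, ve \<omega>))})"
      unfolding f0_def E_def vt_def ve_def by auto
    then show "\<omega> \<in> {\<omega> \<in> space M. (vt \<omega>, ve \<omega>) \<in> Cset}" unfolding Cset_def using assms(10) by auto
  qed
  have f0E: "f0 -` E \<inter> space M \<in> sets M" by (rule measurable_sets[OF f0m Esets])
  have "1 - \<alpha> \<le> 1 - measure M (f0 -` E \<inter> space M)" using badle by simp
  also have "\<dots> = measure M (space M - (f0 -` E \<inter> space M))" using P.prob_compl[OF f0E] by simp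
  also have "\<dots> \<le> measure M {\<omega> \<in> space M. (vt \<omega>, ve \<omega>) \<in> Cset}"
    by (rule P.finite_measure_mono[OF sub Bsets])
  also have "{\<omega> \<in> space M. (vt \<omega>, ve \<omega>) \<in> Cset} = {\<omega> \<in> space M.
            \<theta>s \<in> confset \<Theta> \<Psi> sigma2 \<alpha> (\<lambda>i. yp \<theta>s \<psi>s (T \<omega> i) + eps \<omega> i) (T \<omega>)}"
    using conf_iff by auto
  finally show ?thesis .
qed

end
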